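(* Let $a,b,c$ be positive numbers with $a<b<c$. Define $\mathcal Z_{a,b}=\{0\}$ if $a/b\notin\mathbb Q$, and $\mathcal Z_{a,b}=\{0,b/q,2b/q,\dots,(p-1)b/q\}$ if $a/b=p/q$ with $p,q$ coprime positive integers. Then $\mathcal D_{a,b,c}=\emptyset$ if and only if $\mathcal D_{a,b,c}\cap(\mathcal Z_{a,b}\cup(c-\mathcal Z_{a,b}))=\emptyset$.
   Context: For $a,b,c>0$ and $t\in\mathbb R$, $\mathbf M_{a,b,c}(t)=(\chi_{[0,c)}(t-\mu+\lambda))_{\mu\in a\mathbb Z,\lambda\in b\mathbb Z}$ is the infinite matrix with rows indexed by $a\mathbb Z$ and columns by $b\mathbb Z$, acting by $(\mathbf M_{a,b,c}(t)\mathbf x)(\mu)=\sum_{\lambda\in b\mathbb Z}\chi_{[0,c)}(t-\mu+\lambda)\mathbf x(\lambda)$. $\mathcal B_b$ is the set of vectors $(\mathbf x(\lambda))_{\lambda\in b\mathbb Z}$ with entries in $\{0,1\}$, and $\mathcal B_b^0=\{\mathbf x\in\mathcal B_b:\mathbf x(0)=1\}$. $\mathbf 2$ denotes the vector indexed by $a\mathbb Z$ all of whose entries are $2$. $\mathcal D_{a,b,c}=\{t\in\mathbb R:\mathbf M_{a,b,c}(t)\mathbf x=\mathbf 2\text{ for some }\mathbf x\in\mathcal B_b^0\}$. *)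

theory Defs
  imports Complex_Main
begin

definition chi :: "real \<Rightarrow> real \<Rightarrow> real" where
  "chi c s = (if 0 \<le> s \<and> s < c then 1 else 0)"

text \<open>Vectors indexed by bZ are represented as functions on int (index k stands for
  lambda = b*k); rows indexed by aZ are represented by m :: int (mu = a*m).
  (M_{a,b,c}(t) x)(a*m) = sum over k of chi(t - a*m + b*k) * x(k); the sum ranges over
  the (finite, since b > 0) set of k where the indicator is nonzero.\<close>
definition Mmul :: "real \<Rightarrow> real \<Rightarrow> real \<Rightarrow> real \<Rightarrow> (int \<Rightarrow> real) \<Rightarrow> int \<Rightarrow> real" where
  "Mmul a b c t x m =
     (\<Sum>k\<in>{k::int. chi c (t - a * of_int m + b * of_int k) \<noteq> 0}.
         chi c (t - a * of_int m + b * of_int k) * x k)"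

definition Bvec :: "(int \<Rightarrow> real) set" where
  "Bvec = {x. \<forall>k. x k \<in> {0, 1}}"

definition Bvec0 :: "(int \<Rightarrow> real) set" where
  "Bvec0 = {x \<in> Bvec. x 0 = 1}"

definition Dset :: "real \<Rightarrow> real \<Rightarrow> real \<Rightarrow> real set" where
  "Dset a b c = {t. \<exists>x\<in>Bvec0. \<forall>m::int. Mmul a b c t x m = 2}"

definition Zset :: "real \<Rightarrow> real \<Rightarrow> real set" where
  "Zset a b = (if a / b \<in> \<rat> then
      {real j * b / real q | j p q :: nat. 0 < p \<and> 0 < q \<and> coprime p q
                                  \<and> a / b = real p / real q \<and> j < p}
    else {0})"

end

theory Submission imports Defs "HOL-Library.Diagonal_Subsequence" "HOL-Library.Nat_Bijection" "HOL-Library.Infinite_Set" begin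

definition posset :: "real \<Rightarrow> real \<Rightarrow> real \<Rightarrow> real \<Rightarrow> int \<Rightarrow> int set" where
  "posset a b c t m = {k. 0 \<le> t - a * of_int m + b * of_int k \<and> t - a * of_int m + b * of_int k < c}"

lemma finite_posset:
  assumes "b > 0" shows "finite (posset a b c t m)"
proof -
  have "posset a b c t m \<subseteq> {\<lfloor>(a * of_int m - t) / b\<rfloor> .. \<lceil>(a * of_int m - t + c) / b\<rceil>}"
  proof
    fix k assume "k \<in> posset a b c t m"
    hence h: "a * of_int m - t \<le> b * of_int k" "b * of_int k < a * of_int m - t + c"
      unfolding posset_def by auto
    have "(a * of_int m - t) / b \<le> of_int k" using h(1) assms by (simp add: pos_divide_le_eq mult.commute)
    moreover have "of_int k < (a * of_int m - t + c) / b" using h(2) assms by (simp add: pos_less_divide_eq mult.commute)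
    ultimately show "k \<in> {\<lfloor>(a * of_int m - t) / b\<rfloor> .. \<lceil>(a * of_int m - t + c) / b\<rceil>}"
      by (auto simp: floor_le_iff le_ceiling_iff)
  qed
  thus ?thesis using finite_subset by blast
qed

lemma Mmul_card:
  assumes "b > 0" "x \<in> Bvec"
  shows "Mmul a b c t x m = real (card {k \<in> posset a b c t m. x k = 1})"
proof -
  have S: "{k::int. chi c (t - a * of_int m + b * of_int k) \<noteq> 0} = posset a b c t m"
    by (auto simp: chi_def posset_def)
  have "Mmul a b c t x m = (\<Sum>k\<in>posset a b c t m. x k)"
    unfolding Mmul_def S by (intro sum.cong) (auto simp: chi_def posset_def)
  also have "\<dots> = (\<Sum>k\<in>posset a b c t m. if x k = 1 then 1 else 0)"
    using assms(2) by (intro sum.cong) (auto simp: Bvec_def)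
  also have "\<dots> = real (card {k \<in> posset a b c t m. x k = 1})"
    using finite_posset[OF assms(1)] by (simp add: sum.If_cases Int_def conj_commute)
  finally show ?thesis .
qed


lemma D_iff:
  fixes a b c t u :: real
  assumes "b > 0"
  shows "t \<in> Dset a b c \<longleftrightarrow> (\<exists>x\<in>Bvec0. \<forall>m. card {k \<in> posset a b c t m. x k = 1} = 2)"
proof -
  have "\<And>x m. x \<in> Bvec0 \<Longrightarrow> Mmul a b c t x m = 2 \<longleftrightarrow> card {k \<in> posset a b c t m. x k = 1} = 2"
    using Mmul_card[OF assms] by (auto simp: Bvec0_def)
  thus ?thesis unfolding Dset_def by auto
qed

lemma shift_a:
  fixes a b c t u :: real
  assumes "b > 0" "t \<in> Dset a b c"
  shows "t + a * of_int j \<in> Dset a b c"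
proof -
  have P: "posset a b c (t + a * of_int j) m = posset a b c t (m - j)" for m
    by (auto simp: posset_def algebra_simps)
  show ?thesis using assms unfolding D_iff[OF assms(1)] P by blast
qed

lemma shift_b:
  fixes a b c t u :: real
  assumes "b > 0" and x: "x \<in> Bvec0" "\<forall>m. card {k \<in> posset a b c t m. x k = 1} = 2" and "x k0 = 1"
  shows "t + b * of_int k0 \<in> Dset a b c"
proof -
  define y where "y = (\<lambda>k. x (k + k0))"
  have "y \<in> Bvec0" using x(1) \<open>x k0 = 1\<close> by (auto simp: Bvec0_def Bvec_def y_def)
  moreover have "card {k \<in> posset a b c (t + b * of_int k0) m. y k = 1} = 2" for m
  proof -
    have "{k \<in> posset a b c (t + b * of_int k0) m. y k = 1} = (\<lambda>k. k - k0) ` {k \<in> posset a b c t m. x k = 1}"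
      by (auto simp: posset_def y_def algebra_simps image_iff intro!: exI[of _ "_ + k0"])
    moreover have "inj (\<lambda>k::int. k - k0)" by (auto simp: inj_def)
    ultimately show ?thesis using x(2) by (simp add: card_image inj_on_def)
  qed
  ultimately show ?thesis unfolding D_iff[OF assms(1)] by blast
qed

lemma stab:
  fixes a b c t u :: real
  assumes "b > 0"
  shows "\<exists>\<delta>>0. \<delta> \<le> 1 \<and> (\<forall>k. -1 \<le> u - a * of_int m + b * of_int k \<and> u - a * of_int m + b * of_int k < c \<longrightarrow>
     (0 \<le> u - a * of_int m + b * of_int k \<longrightarrow> u - a * of_int m + b * of_int k + \<delta> \<le> c) \<and>
     (u - a * of_int m + b * of_int k < 0 \<longrightarrow> u - a * of_int m + b * of_int k + \<delta> \<le> 0))"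
proof -
  define p where "p k = u - a * of_int m + b * of_int k" for k
  define F where "F = {k. -1 \<le> p k \<and> p k < c}"
  have "F = posset a b (c + 1) (u + 1) m" by (auto simp: F_def posset_def p_def)
  hence fF: "finite F" using finite_posset[OF assms] by simp
  define g where "g k = (if 0 \<le> p k then c - p k else - p k)" for k
  define \<delta> where "\<delta> = Min (insert 1 (g ` F))"
  have "\<delta> > 0" unfolding \<delta>_def using fF by (auto simp: g_def F_def)
  moreover have "\<delta> \<le> 1" unfolding \<delta>_def using fF by auto
  moreover have le: "\<delta> \<le> g k" if "k \<in> F" for k unfolding \<delta>_def using fF that by auto
  moreover have "\<forall>k. -1 \<le> p k \<and> p k < c \<longrightarrow> (0 \<le> p k \<longrightarrow> p k + \<delta> \<le> c) \<and> (p k < 0 \<longrightarrow> p k + \<delta> \<le> 0)"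
  proof (intro allI impI)
    fix k assume "-1 \<le> p k \<and> p k < c"
    hence "\<delta> \<le> g k" using le by (simp add: F_def)
    thus "(0 \<le> p k \<longrightarrow> p k + \<delta> \<le> c) \<and> (p k < 0 \<longrightarrow> p k + \<delta> \<le> 0)" by (auto simp: g_def)
  qed
  ultimately show ?thesis unfolding p_def by blast
qed


lemma stab_card:
  fixes a b c u v :: real
  assumes "b > 0" "u \<le> v" "v < u + \<delta>" "\<delta> \<le> 1"
    and H: "\<forall>k. -1 \<le> u - a * of_int m + b * of_int k \<and> u - a * of_int m + b * of_int k < c \<longrightarrow>
     (0 \<le> u - a * of_int m + b * of_int k \<longrightarrow> u - a * of_int m + b * of_int k + \<delta> \<le> c) \<and>
     (u - a * of_int m + b * of_int k < 0 \<longrightarrow> u - a * of_int m + b * of_int k + \<delta> \<le> 0)"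
    and Y: "\<forall>k. -1 \<le> u - a * of_int m + b * of_int k \<and> u - a * of_int m + b * of_int k < c \<longrightarrow> y k = x k"
  shows "{k \<in> posset a b c v m. y k = 1} = {k \<in> posset a b c u m. x k = 1}"
proof -
  have "0 \<le> v - a * of_int m + b * of_int k \<and> v - a * of_int m + b * of_int k < c \<and> y k = 1 \<longleftrightarrow>
        0 \<le> u - a * of_int m + b * of_int k \<and> u - a * of_int m + b * of_int k < c \<and> x k = 1" for k
  proof -
    define p where "p = u - a * of_int m + b * of_int k"
    have pv: "v - a * of_int m + b * of_int k = p + (v - u)" unfolding p_def by simp
    show ?thesis
    proof (cases "-1 \<le> p \<and> p < c")
      case True
      have hk: "(0 \<le> p \<longrightarrow> p + \<delta> \<le> c) \<and> (p < 0 \<longrightarrow> p + \<delta> \<le> 0)"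
        using H True unfolding p_def by blast
      have yk: "y k = x k" using Y True unfolding p_def by blast
      show ?thesis unfolding pv p_def[symmetric] using hk yk True assms(2,3) by auto
    next
      case False
      then show ?thesis using assms(2,3,4) unfolding pv p_def[symmetric] by auto
    qed
  qed
  thus ?thesis by (auto simp: posset_def)
qed

lemma right_closed:
  fixes a b c u :: real
  assumes "b > 0" and approx: "\<And>n::nat. \<exists>v\<in>Dset a b c. u \<le> v \<and> v < u + 1 / (real n + 1)"
  shows "u \<in> Dset a b c"
proof -
  have "\<forall>n. \<exists>w. w \<in> Dset a b c \<and> u \<le> w \<and> w < u + 1 / (real n + 1)"
    using approx by blast
  from choice[OF this] obtain v where v: "\<And>n. v n \<in> Dset a b c \<and> u \<le> v n \<and> v n < u + 1 / (real n + 1)"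
    by blast
  have "\<forall>n. \<exists>x. x \<in> Bvec0 \<and> (\<forall>m. card {k \<in> posset a b c (v n) m. x k = 1} = 2)"
    using v D_iff[OF assms(1)] by blast
  from choice[OF this] obtain xs where xs: "\<And>n. xs n \<in> Bvec0 \<and> (\<forall>m. card {k \<in> posset a b c (v n) m. xs n k = 1} = 2)"
    by blast
  have xs01: "xs n k = 0 \<or> xs n k = 1" for n k using xs[of n] by (auto simp: Bvec0_def Bvec_def)
  define P where "P n s \<longleftrightarrow> (\<forall>i. xs (s i) (int_decode n) = xs (s 0) (int_decode n))" for n and s :: "nat \<Rightarrow> nat"
  interpret subseqs P
  proof
    fix n and s :: "nat \<Rightarrow> nat" assume "strict_mono s"
    obtain val where "infinite {i. xs (s i) (int_decode n) = val}"
    proof -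
      have "{i. xs (s i) (int_decode n) = 0} \<union> {i. xs (s i) (int_decode n) = 1} = UNIV"
        using xs01 by auto
      hence "infinite {i. xs (s i) (int_decode n) = 0} \<or> infinite {i. xs (s i) (int_decode n) = 1}"
        using finite_Un[of "{i. xs (s i) (int_decode n) = 0}" "{i. xs (s i) (int_decode n) = 1}"] by simp
      thus ?thesis using that by blast
    qed
    then obtain r :: "nat \<Rightarrow> nat" where r: "strict_mono r" "\<And>i. r i \<in> {i. xs (s i) (int_decode n) = val}"
      using infinite_enumerate by blast
    show "\<exists>r'. strict_mono r' \<and> P n (s \<circ> r')"
      using r by (intro exI[of _ r]) (auto simp: P_def)
  qed
  have stable: "P n (s \<circ> r)" if "strict_mono r" "P n s" for r s n
    using that unfolding P_def by (metis comp_apply)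
  define y where "y k = xs (diagseq (Suc (int_encode k))) k" for k
  have ylim: "xs (diagseq i) k = y k" if "i \<ge> Suc (int_encode k)" for i k
  proof -
    have "P (int_encode k) (diagseq \<circ> (+) (Suc (int_encode k)))"
      by (rule diagseq_holds) (use stable in blast)
    hence "xs (diagseq (Suc (int_encode k) + (i - Suc (int_encode k)))) k = xs (diagseq (Suc (int_encode k) + 0)) k"
      unfolding P_def comp_def int_encode_inverse by (rule spec)
    thus ?thesis using that by (simp add: y_def)
  qed
  have yB: "y \<in> Bvec0"
  proof -
    have "y k \<in> {0,1}" for k using xs01 by (auto simp: y_def)
    moreover have "y 0 = 1" using xs by (auto simp: y_def Bvec0_def)
    ultimately show ?thesis by (auto simp: Bvec0_def Bvec_def)
  qed
  have "card {k \<in> posset a b c u m. y k = 1} = 2" for m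
  proof -
    obtain \<delta> where d: "\<delta> > 0" "\<delta> \<le> 1" and H: "\<forall>k. -1 \<le> u - a * of_int m + b * of_int k \<and> u - a * of_int m + b * of_int k < c \<longrightarrow>
     (0 \<le> u - a * of_int m + b * of_int k \<longrightarrow> u - a * of_int m + b * of_int k + \<delta> \<le> c) \<and>
     (u - a * of_int m + b * of_int k < 0 \<longrightarrow> u - a * of_int m + b * of_int k + \<delta> \<le> 0)"
      using stab[OF assms(1), of u a m c] by blast
    define F where "F = posset a b (c + 1) (u + 1) m"
    have fF: "finite F" unfolding F_def using finite_posset[OF assms(1)] .
    have inF: "k \<in> F" if "-1 \<le> u - a * of_int m + b * of_int k \<and> u - a * of_int m + b * of_int k < c" for k
      using that by (auto simp: F_def posset_def)
    obtain N :: nat where N: "1 / (real N + 1) < \<delta>"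
    proof -
      obtain N :: nat where "1 / \<delta> < real N" using reals_Archimedean2 by blast
      hence "1 / (real N + 1) < \<delta>" using d(1)
        by (simp add: divide_less_eq field_simps)
      thus ?thesis using that by blast
    qed
    define i where "i = N + Suc (\<Sum>k\<in>F. int_encode k)"
    define n where "n = diagseq i"
    have "i \<le> n" unfolding n_def using seq_suble[OF subseq_diagseq] by simp
    hence "1 / (real n + 1) \<le> 1 / (real N + 1)" unfolding i_def by (simp add: frac_le)
    hence vn: "u \<le> v n" "v n < u + \<delta>" using v[of n] N by auto
    have agree: "xs n k = y k" if "k \<in> F" for k
    proof -
      have "int_encode k \<le> (\<Sum>k\<in>F. int_encode k)" using member_le_sum[OF that _ fF, of int_encode] by simp
      hence "i \<ge> Suc (int_encode k)" unfolding i_def by simp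
      thus ?thesis unfolding n_def by (rule ylim)
    qed
    have "{k \<in> posset a b c (v n) m. xs n k = 1} = {k \<in> posset a b c u m. y k = 1}"
      by (rule stab_card[OF assms(1) vn d(2) H]) (use agree inF in auto)
    moreover have "card {k \<in> posset a b c (v n) m. xs n k = 1} = 2" using xs[of n] by blast
    ultimately show ?thesis by simp
  qed
  thus ?thesis using yB D_iff[OF assms(1)] by blast
qed


lemma pos_in_D:
  fixes a b c s :: real
  assumes "b > 0" "x \<in> Bvec0" "\<forall>m. card {k \<in> posset a b c s m. x k = 1} = 2" "x k = 1"
  shows "s - a * of_int m + b * of_int k \<in> Dset a b c"
proof -
  have "s + b * of_int k \<in> Dset a b c" by (rule shift_b[OF assms])
  from shift_a[OF assms(1) this, of "-m"]
  have "s + b * of_int k + a * of_int (- m) \<in> Dset a b c" .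
  moreover have "s + b * of_int k + a * of_int (- m) = s - a * of_int m + b * of_int k" by simp
  ultimately show ?thesis by metis
qed

lemma main:
  fixes a b c t :: real
  assumes "0 < a" "0 < b" "t \<in> Dset a b c"
  shows "0 \<in> Dset a b c \<or> c \<in> Dset a b c"
proof -
  define S where "S = Dset a b c \<inter> {0..}"
  define j where "j = \<lceil>- t / a\<rceil>"
  have "a * (- t / a) \<le> a * of_int j" unfolding j_def using assms(1)
    by (intro mult_left_mono) auto
  hence "t + a * of_int j \<ge> 0" using assms(1) by simp
  hence "t + a * of_int j \<in> S" unfolding S_def using shift_a[OF assms(2,3)] by auto
  hence Sne: "S \<noteq> {}" by auto
  have bdd: "bdd_below S" unfolding S_def by (auto intro: bdd_belowI[of _ 0])
  define s where "s = Inf S"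
  have s0: "s \<ge> 0" unfolding s_def using Sne by (intro cInf_greatest) (auto simp: S_def)
  have slow: "s \<le> v" if "v \<in> S" for v unfolding s_def using bdd that by (rule cInf_lower[rotated])
  have sD: "s \<in> Dset a b c"
  proof (rule right_closed[OF assms(2)])
    fix n :: nat
    have "Inf S < s + 1 / (real n + 1)" unfolding s_def by simp
    then obtain v where "v \<in> S" "v < s + 1 / (real n + 1)" using cInf_lessD[OF Sne] by blast
    thus "\<exists>v\<in>Dset a b c. s \<le> v \<and> v < s + 1 / (real n + 1)" using slow by (auto simp: S_def)
  qed
  show ?thesis
  proof (cases "s = 0")
    case True thus ?thesis using sD by simp
  next
    case False
    hence spos: "s > 0" using s0 by simp
    obtain x where x: "x \<in> Bvec0" "\<forall>m. card {k \<in> posset a b c s m. x k = 1} = 2"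
      using sD D_iff[OF assms(2)] by blast
    have qD: "s - a * of_int m + b * of_int k \<in> Dset a b c" if "x k = 1" for m k
      by (rule pos_in_D[OF assms(2) x that])
    show ?thesis
    proof (cases "\<forall>\<delta>>0. \<exists>m k. x k = 1 \<and> c \<le> s - a * of_int m + b * of_int k \<and> s - a * of_int m + b * of_int k < c + \<delta>")
      case True
      have "c \<in> Dset a b c"
      proof (rule right_closed[OF assms(2)])
        fix n :: nat
        obtain m k where "x k = 1" "c \<le> s - a * of_int m + b * of_int k" "s - a * of_int m + b * of_int k < c + 1 / (real n + 1)"
          using True[rule_format, of "1 / (real n + 1)"] by auto
        thus "\<exists>v\<in>Dset a b c. c \<le> v \<and> v < c + 1 / (real n + 1)" using qD by blast
      qed
      thus ?thesis by simp
    next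
      case False
      then obtain \<delta> where d: "\<delta> > 0" and nd: "\<And>m k. x k = 1 \<Longrightarrow> \<not> (c \<le> s - a * of_int m + b * of_int k \<and> s - a * of_int m + b * of_int k < c + \<delta>)"
        by blast
      define \<epsilon> where "\<epsilon> = min \<delta> s / 2"
      have e: "0 < \<epsilon>" "\<epsilon> < s" "\<epsilon> < \<delta>" using d spos by (auto simp: \<epsilon>_def)
      have "card {k \<in> posset a b c (s - \<epsilon>) m. x k = 1} = 2" for m
      proof -
        have "{k \<in> posset a b c (s - \<epsilon>) m. x k = 1} = {k \<in> posset a b c s m. x k = 1}"
        proof -
          have "x k = 1 \<Longrightarrow> (k \<in> posset a b c (s - \<epsilon>) m) = (k \<in> posset a b c s m)" for k
          proof -
          assume xk: "x k = 1"
          define q where "q = s - a * of_int m + b * of_int k"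
          have q1: "q \<ge> 0 \<Longrightarrow> q \<ge> s" using qD[OF xk, of m] slow unfolding q_def S_def by auto
          have q2: "\<not> (c \<le> q \<and> q < c + \<delta>)" using nd[OF xk] unfolding q_def .
          have "(k \<in> posset a b c (s - \<epsilon>) m) = (0 \<le> q - \<epsilon> \<and> q - \<epsilon> < c)"
            unfolding posset_def q_def by auto
          also have "\<dots> = (0 \<le> q \<and> q < c)" using q1 q2 e by (smt (verit))
          also have "\<dots> = (k \<in> posset a b c s m)" by (simp add: posset_def q_def)
          finally show "(k \<in> posset a b c (s - \<epsilon>) m) = (k \<in> posset a b c s m)" .
          qed
          thus ?thesis by blast
        qed
        thus ?thesis using x(2) by simp
      qed
      hence "s - \<epsilon> \<in> Dset a b c" using x(1) D_iff[OF assms(2)] by blast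
      hence "s - \<epsilon> \<in> S" using e by (auto simp: S_def)
      hence "s \<le> s - \<epsilon>" by (rule slow)
      thus ?thesis using e by simp
    qed
  qed
qed


lemma zero_in_Z:
  fixes a b :: real
  assumes "0 < a" "0 < b"
  shows "0 \<in> Zset a b"
proof (cases "a / b \<in> \<rat>")
  case True
  then obtain p q :: nat where pq: "q \<noteq> 0" "\<bar>a / b\<bar> = real p / real q" "coprime p q"
    by (rule Rats_abs_nat_div_natE)
  have ab: "a / b = real p / real q" using pq(2) assms by simp
  moreover have "a / b > 0" using assms by simp
  ultimately have "p \<noteq> 0" by (metis of_nat_0 div_0 less_irrefl)
  hence "0 \<in> {real j * b / real q | j p q :: nat. 0 < p \<and> 0 < q \<and> coprime p q
                                  \<and> a / b = real p / real q \<and> j < p}"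
    using pq ab by (intro CollectI exI[of _ 0] exI[of _ p] exI[of _ q]) auto
  thus ?thesis using True by (simp add: Zset_def)
next
  case False thus ?thesis by (simp add: Zset_def)
qed

theorem theorem3p3:
  fixes a b c :: real
  assumes "0 < a" and "a < b" and "b < c"
  shows "Dset a b c = {} \<longleftrightarrow>
         Dset a b c \<inter> (Zset a b \<union> (\<lambda>z. c - z) ` Zset a b) = {}"
proof
  assume "Dset a b c = {}" thus "Dset a b c \<inter> (Zset a b \<union> (\<lambda>z. c - z) ` Zset a b) = {}" by simp
next
  assume H: "Dset a b c \<inter> (Zset a b \<union> (\<lambda>z. c - z) ` Zset a b) = {}"
  have b0: "0 < b" using assms by simp
  have Z: "0 \<in> Zset a b" by (rule zero_in_Z) (use assms in auto)
  hence "c \<in> (\<lambda>z. c - z) ` Zset a b" by (intro image_eqI[of _ _ 0]) auto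
  show "Dset a b c = {}"
  proof (rule ccontr)
    assume "Dset a b c \<noteq> {}"
    then obtain t where "t \<in> Dset a b c" by blast
    from main[OF assms(1) b0 this] Z \<open>c \<in> _\<close> H show False by blast
  qed
qed

end
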